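(* Consider $f:\mathbb R^n\to\mathbb R$ convex and continuously differentiable, $A\in\mathbb R^{m\times n}$, $b\in\mathbb R^m$, and the parameters and algorithm described in the context. For the same initial points and parameters, a sequence $\{(x_k,\lambda_k)\}_{k\ge0}$ is generated by the algorithm (Case I, resp. Case II) if and only if for every $k\ge1$ it satisfies $x_{k+1}-\bar x_k=-\gamma\big[g_{k+1}+A^\top(\lambda_{k+1}+\alpha_k(\lambda_{k+1}-\lambda_k))+\beta A^\top(Ax_{k+1}-b)\big]$ and $\lambda_{k+1}-\bar\lambda_k=\delta\big[Ax_{k+1}-b+\alpha_kA(x_{k+1}-x_k)\big]$, where $g_{k+1}=\nabla f(x_{k+1})$ in Case I and $g_{k+1}=\nabla f(\bar x_k)$ in Case II.
   Context: Parameter sequence: $\{t_k\}_{k\ge1}$ is nondecreasing, $t_1=1$, $t_k>1$ for all $k>2$, $t_k\to+\infty$, and $t_{k+1}^2-t_k^2\le\rho t_{k+1}$ for all $k\ge 1$, with fixed $\rho\in(0,1]$. Fix $\eta\in[\rho,1]$, $\gamma>0$, $\delta>0$, $\beta\ge0$. Algorithm: initial points $x_0=x_1\in\mathbb R^n$, $\lambda_0=\lambda_1\in\mathbb R^m$. For $k=1,2,\dots$: set $\alpha_k=(t_{k+1}-\eta)/\eta$, $c_k=t_{k+1}/\eta$, $\bar x_k=x_k+\frac{t_k-1}{t_{k+1}}(x_k-x_{k-1})$, $\bar\lambda_k=\lambda_k+\frac{t_k-1}{t_{k+1}}(\lambda_k-\lambda_{k-1})$, $p_k=c_k\bar\lambda_k-\alpha_k\lambda_k$,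 $r_k=\alpha_kAx_k+b$. Case I ($f$ convex and $C^1$): $x_{k+1}=\arg\min_{x}\{f(x)+\frac\beta2\|Ax-b\|^2+\frac1{2\gamma}\|x-\bar x_k\|^2+\langle p_k,Ax-b\rangle+\frac\delta2\|c_kAx-r_k\|^2\}$. Case II ($f$ convex with $L$-Lipschitz gradient, and $\gamma\le 1/L$): $x_{k+1}=\arg\min_{x}\{\langle\nabla f(\bar x_k),x\rangle+\frac\beta2\|Ax-b\|^2+\frac1{2\gamma}\|x-\bar x_k\|^2+\langle p_k,Ax-b\rangle+\frac\delta2\|c_kAx-r_k\|^2\}$. Then $\lambda_{k+1}=\bar\lambda_k+\delta(c_kAx_{k+1}-r_k)$. *)

theory Defs
  imports "HOL-Analysis.Analysis"
begin

definition alg_alpha :: "(nat \<Rightarrow> real) \<Rightarrow> real \<Rightarrow> nat \<Rightarrow> real" where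
  "alg_alpha t \<eta> k = (t (Suc k) - \<eta>) / \<eta>"

definition alg_c :: "(nat \<Rightarrow> real) \<Rightarrow> real \<Rightarrow> nat \<Rightarrow> real" where
  "alg_c t \<eta> k = t (Suc k) / \<eta>"

definition alg_bar :: "(nat \<Rightarrow> real) \<Rightarrow> (nat \<Rightarrow> 'a::real_vector) \<Rightarrow> nat \<Rightarrow> 'a" where
  "alg_bar t x k = x k + ((t k - 1) / t (Suc k)) *\<^sub>R (x k - x (k - 1))"

definition alg_p :: "(nat \<Rightarrow> real) \<Rightarrow> real \<Rightarrow> (nat \<Rightarrow> real^'m) \<Rightarrow> nat \<Rightarrow> real^'m" where
  "alg_p t \<eta> lam k = alg_c t \<eta> k *\<^sub>R alg_bar t lam k - alg_alpha t \<eta> k *\<^sub>R lam k"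

definition alg_r :: "(nat \<Rightarrow> real) \<Rightarrow> real \<Rightarrow> real^'n^'m \<Rightarrow> real^'m \<Rightarrow> (nat \<Rightarrow> real^'n) \<Rightarrow> nat \<Rightarrow> real^'m" where
  "alg_r t \<eta> A b x k = alg_alpha t \<eta> k *\<^sub>R (A *v x k) + b"

text \<open>Subproblem objective; the first argument is the (possibly linearized) smooth term.\<close>
definition alg_obj ::
  "(real^'n \<Rightarrow> real) \<Rightarrow> (nat \<Rightarrow> real) \<Rightarrow> real \<Rightarrow> real \<Rightarrow> real \<Rightarrow> real \<Rightarrow> real^'n^'m \<Rightarrow> real^'m
    \<Rightarrow> (nat \<Rightarrow> real^'n) \<Rightarrow> (nat \<Rightarrow> real^'m) \<Rightarrow> nat \<Rightarrow> real^'n \<Rightarrow> real" where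
  "alg_obj F t \<eta> \<gamma> \<delta> \<beta> A b x lam k y =
     F y + \<beta> / 2 * (norm (A *v y - b))\<^sup>2 + 1 / (2 * \<gamma>) * (norm (y - alg_bar t x k))\<^sup>2
     + inner (alg_p t \<eta> lam k) (A *v y - b)
     + \<delta> / 2 * (norm (alg_c t \<eta> k *\<^sub>R (A *v y) - alg_r t \<eta> A b x k))\<^sup>2"

definition alg_lam_update ::
  "(nat \<Rightarrow> real) \<Rightarrow> real \<Rightarrow> real \<Rightarrow> real^'n^'m \<Rightarrow> real^'m \<Rightarrow> (nat \<Rightarrow> real^'n) \<Rightarrow> (nat \<Rightarrow> real^'m) \<Rightarrow> nat \<Rightarrow> real^'m" where
  "alg_lam_update t \<eta> \<delta> A b x lam k =
     alg_bar t lam k + \<delta> *\<^sub>R (alg_c t \<eta> k *\<^sub>R (A *v x (Suc k)) - alg_r t \<eta> A b x k)"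

definition alg_generated ::
  "(nat \<Rightarrow> real^'n \<Rightarrow> real) \<Rightarrow> (nat \<Rightarrow> real) \<Rightarrow> real \<Rightarrow> real \<Rightarrow> real \<Rightarrow> real \<Rightarrow> real^'n^'m \<Rightarrow> real^'m
    \<Rightarrow> (nat \<Rightarrow> real^'n) \<Rightarrow> (nat \<Rightarrow> real^'m) \<Rightarrow> bool" where
  "alg_generated Fk t \<eta> \<gamma> \<delta> \<beta> A b x lam \<longleftrightarrow>
     (\<forall>k\<ge>1. is_arg_min (alg_obj (Fk k) t \<eta> \<gamma> \<delta> \<beta> A b x lam k) (\<lambda>_. True) (x (Suc k))
            \<and> lam (Suc k) = alg_lam_update t \<eta> \<delta> A b x lam k)"

text \<open>The characterizing equations (for k >= 1), with g k standing for g_{k+1}.\<close>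
definition alg_equations ::
  "(nat \<Rightarrow> real^'n) \<Rightarrow> (nat \<Rightarrow> real) \<Rightarrow> real \<Rightarrow> real \<Rightarrow> real \<Rightarrow> real \<Rightarrow> real^'n^'m \<Rightarrow> real^'m
    \<Rightarrow> (nat \<Rightarrow> real^'n) \<Rightarrow> (nat \<Rightarrow> real^'m) \<Rightarrow> bool" where
  "alg_equations g t \<eta> \<gamma> \<delta> \<beta> A b x lam \<longleftrightarrow>
     (\<forall>k\<ge>1.
       x (Suc k) - alg_bar t x k =
         - \<gamma> *\<^sub>R (g k + transpose A *v (lam (Suc k) + alg_alpha t \<eta> k *\<^sub>R (lam (Suc k) - lam k))
                    + \<beta> *\<^sub>R (transpose A *v (A *v x (Suc k) - b)))
       \<and> lam (Suc k) - alg_bar t lam k =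
         \<delta> *\<^sub>R (A *v x (Suc k) - b + alg_alpha t \<eta> k *\<^sub>R (A *v (x (Suc k) - x k))))"

end

theory Submission
  imports Defs
begin

lemma adj: "inner h (transpose A *v w) = inner (A *v h) (w::real^'m)" for A :: "real^'n^'m"
  by (metis dot_lmul_matrix inner_commute transpose_matrix_vector)

lemma adj2: "inner h (w v* A) = inner (w::real^'m) (A *v h)" for A :: "real^'n^'m"
  by (metis dot_lmul_matrix inner_commute)

lemma sq_convex_pt:
  fixes a b :: "'a::real_inner"
  assumes "0 \<le> t" "t \<le> 1"
  shows "(norm ((1-t) *\<^sub>R a + t *\<^sub>R b))\<^sup>2 \<le> (1-t) * (norm a)\<^sup>2 + t * (norm b)\<^sup>2"
proof -
  have "(1-t) * (norm a)\<^sup>2 + t * (norm b)\<^sup>2 - (norm ((1-t) *\<^sub>R a + t *\<^sub>R b))\<^sup>2 = t*(1-t)*(norm (a-b))\<^sup>2"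
    unfolding power2_norm_eq_inner by (simp add: inner_add_left inner_add_right inner_diff_left inner_diff_right inner_commute algebra_simps power2_eq_square)
  moreover have "t*(1-t)*(norm (a-b))\<^sup>2 \<ge> 0" using assms by simp
  ultimately show ?thesis by linarith
qed

lemma sq_convex:
  fixes L :: "'a::real_vector \<Rightarrow> 'b::real_inner"
  assumes "linear L"
  shows "convex_on UNIV (\<lambda>y. (norm (L y - w))\<^sup>2)"
proof (rule convex_onI)
  fix t :: real and x y assume "0 < t" "t < 1"
  have "L ((1 - t) *\<^sub>R x + t *\<^sub>R y) - w = (1-t) *\<^sub>R (L x - w) + t *\<^sub>R (L y - w)"
    using assms by (simp add: linear_add linear_diff linear_scale algebra_simps)
  then show "(norm (L ((1 - t) *\<^sub>R x + t *\<^sub>R y) - w))\<^sup>2 \<le> (1 - t) * (norm (L x - w))\<^sup>2 + t * (norm (L y - w))\<^sup>2"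
    using sq_convex_pt[of t "L x - w" "L y - w"] \<open>0 < t\<close> \<open>t < 1\<close> by simp
qed simp

lemma affine_convex:
  assumes "\<And>t x y. f ((1 - t) *\<^sub>R x + t *\<^sub>R y) = (1 - t) * f x + t * f y"
  shows "convex_on UNIV f"
  by (rule convex_onI) (simp_all add: assms)

lemma sq_deriv:
  assumes "bounded_linear L"
  shows "((\<lambda>y. (norm (L y - w))\<^sup>2) has_derivative (\<lambda>h. 2 * inner (L y - w) (L h))) (at y)"
proof -
  have "((\<lambda>y. inner (L y - w) (L y - w)) has_derivative (\<lambda>h. inner (L y - w) (L h - 0) + inner (L h - 0) (L y - w))) (at y)"
    by (intro has_derivative_inner has_derivative_diff bounded_linear_imp_has_derivative assms has_derivative_const)
  then show ?thesis by (simp add: power2_norm_eq_inner inner_commute)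
qed

lemma opt_char:
  fixes G :: "'a::real_inner \<Rightarrow> real"
  assumes cvx: "convex_on UNIV G" and d: "(G has_derivative (\<lambda>h. inner h g)) (at z)"
  shows "is_arg_min G (\<lambda>_. True) z \<longleftrightarrow> g = 0"
proof
  assume "is_arg_min G (\<lambda>_. True) z"
  then have "\<forall>y. G z \<le> G y" by (auto simp: is_arg_min_def not_less)
  then have "(\<lambda>h. inner h g) = (\<lambda>h. 0)"
    by (intro has_derivative_local_min[OF d]) (simp add: always_eventually)
  then have "inner g g = 0" by metis
  then show "g = 0" by simp
next
  assume g0: "g = 0"
  show "is_arg_min G (\<lambda>_. True) z"
    unfolding is_arg_min_def
  proof (clarsimp simp: not_less)
    fix y
    define \<phi> where "\<phi> s = G (z + s *\<^sub>R (y - z))" for s :: real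
    have "convex_on UNIV \<phi>"
    proof (rule convex_onI)
      fix t a c :: real assume "0 < t" "t < 1"
      have "z + ((1 - t) *\<^sub>R a + t *\<^sub>R c) *\<^sub>R (y - z) = (1-t) *\<^sub>R (z + a *\<^sub>R (y - z)) + t *\<^sub>R (z + c *\<^sub>R (y - z))"
        by (simp add: algebra_simps)
      then show "\<phi> ((1 - t) *\<^sub>R a + t *\<^sub>R c) \<le> (1 - t) * \<phi> a + t * \<phi> c"
        unfolding \<phi>_def using convex_onD[OF cvx, of t] \<open>0 < t\<close> \<open>t < 1\<close> by simp
    qed simp
    have "((\<lambda>s. z + s *\<^sub>R (y - z)) has_derivative (\<lambda>s. s *\<^sub>R (y - z))) (at 0)"
      by (auto intro!: derivative_eq_intros)
    moreover have "(G has_derivative (\<lambda>h. inner h g)) (at (z + 0 *\<^sub>R (y - z)))" using d by simp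
    ultimately have "(\<phi> has_derivative (\<lambda>s. inner (s *\<^sub>R (y - z)) g)) (at 0)"
      unfolding \<phi>_def by (rule has_derivative_compose)
    then have "(\<phi> has_field_derivative 0) (at 0 within UNIV)"
    proof -
      have e: "(*) (0::real) = (\<lambda>s. 0)" by auto
      show ?thesis using \<open>(\<phi> has_derivative _) _\<close> g0 unfolding has_field_derivative_def e by simp
    qed
    from convex_on_imp_above_tangent[OF \<open>convex_on UNIV \<phi>\<close> _ _ _ this, of 1]
    have "\<phi> 1 - \<phi> 0 \<ge> 0" by simp
    then show "G z \<le> G y" by (simp add: \<phi>_def)
  qed
qed

lemma step:
  fixes F :: "real^'n \<Rightarrow> real" and D :: "real^'n \<Rightarrow> real^'n" and A :: "real^'n^'m"
  assumes cvx: "convex_on UNIV F" and gd: "\<And>y. GDERIV F y :> D y"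
    and gam: "\<gamma> > 0" and del: "\<delta> \<ge> 0" and bet: "\<beta> \<ge> 0"
  shows "is_arg_min (alg_obj F t \<eta> \<gamma> \<delta> \<beta> A b x lam k) (\<lambda>_. True) z \<longleftrightarrow>
    D z + \<beta> *\<^sub>R (transpose A *v (A *v z - b)) + (1/\<gamma>) *\<^sub>R (z - alg_bar t x k)
      + transpose A *v alg_p t \<eta> lam k
      + (\<delta> * alg_c t \<eta> k) *\<^sub>R (transpose A *v (alg_c t \<eta> k *\<^sub>R (A *v z) - alg_r t \<eta> A b x k)) = 0"
proof (rule opt_char)
  define c where "c = alg_c t \<eta> k"
  define p where "p = alg_p t \<eta> lam k"
  define r where "r = alg_r t \<eta> A b x k"
  define xb where "xb = alg_bar t x k"
  have bl3: "bounded_linear (\<lambda>y. c *\<^sub>R (A *v y))"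
    by (intro bounded_linear_compose[OF bounded_linear_scaleR_right matrix_vector_mul_bounded_linear])
  have lin: "convex_on UNIV (\<lambda>y. inner p (A *v y - b))"
    by (rule affine_convex) (simp add: algebra_simps inner_add_right inner_diff_right inner_scaleR_right)
  show "convex_on UNIV (alg_obj F t \<eta> \<gamma> \<delta> \<beta> A b x lam k)"
    unfolding alg_obj_def c_def[symmetric] p_def[symmetric] r_def[symmetric] xb_def[symmetric]
    using gam del bet
    by (intro convex_on_add convex_on_cmul cvx lin sq_convex[where L="(*v) A"]
        sq_convex[where L="\<lambda>y. y"] sq_convex[where L="\<lambda>y. c *\<^sub>R (A *v y)"]
        bounded_linear.linear[OF bl3] linear_ident) auto
  have d1: "(F has_derivative (\<lambda>h. inner h (D z))) (at z)" using gd[of z] by (simp add: gderiv_def)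
  have d2: "((\<lambda>y. (norm (A *v y - b))\<^sup>2) has_derivative (\<lambda>h. 2 * inner (A *v z - b) (A *v h))) (at z)"
    by (rule sq_deriv) simp
  have d3: "((\<lambda>y. (norm (y - xb))\<^sup>2) has_derivative (\<lambda>h. 2 * inner (z - xb) h)) (at z)"
    using sq_deriv[OF bounded_linear_ident, of xb z] by simp
  have d4: "((\<lambda>y. inner p (A *v y - b)) has_derivative (\<lambda>h. inner p (A *v h))) (at z)"
    by (auto intro!: derivative_eq_intros bounded_linear_imp_has_derivative)
  have d5: "((\<lambda>y. (norm (c *\<^sub>R (A *v y) - r))\<^sup>2) has_derivative (\<lambda>h. 2 * inner (c *\<^sub>R (A *v z) - r) (c *\<^sub>R (A *v h)))) (at z)"
    using sq_deriv[OF bl3, of r z] by simp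
  have "(alg_obj F t \<eta> \<gamma> \<delta> \<beta> A b x lam k has_derivative
     (\<lambda>h. inner h (D z) + \<beta> / 2 * (2 * inner (A *v z - b) (A *v h)) + 1 / (2 * \<gamma>) * (2 * inner (z - xb) h)
        + inner p (A *v h) + \<delta> / 2 * (2 * inner (c *\<^sub>R (A *v z) - r) (c *\<^sub>R (A *v h))))) (at z)"
    unfolding alg_obj_def c_def[symmetric] p_def[symmetric] r_def[symmetric] xb_def[symmetric]
    by (intro has_derivative_add has_derivative_mult_right d1 d2 d3 d4 d5)
  then show "(alg_obj F t \<eta> \<gamma> \<delta> \<beta> A b x lam k has_derivative (\<lambda>h. inner h
    (D z + \<beta> *\<^sub>R (transpose A *v (A *v z - b)) + (1/\<gamma>) *\<^sub>R (z - alg_bar t x k)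
      + transpose A *v alg_p t \<eta> lam k
      + (\<delta> * alg_c t \<eta> k) *\<^sub>R (transpose A *v (alg_c t \<eta> k *\<^sub>R (A *v z) - alg_r t \<eta> A b x k))))) (at z)"
    unfolding c_def[symmetric] p_def[symmetric] r_def[symmetric] xb_def[symmetric]
    apply (rule has_derivative_eq_rhs)
    apply (rule ext)
    apply (simp add: inner_add_right inner_scaleR_right adj2 inner_commute algebra_simps)
    done
qed

lemma core:
  fixes A :: "real^'n^'m" and Dz z xk xb :: "real^'n" and L' L Lb b :: "real^'m"
  assumes c: "c = \<alpha> + 1" and gam: "\<gamma> > 0"
  shows "((Dz + \<beta> *\<^sub>R (transpose A *v (A *v z - b)) + (1/\<gamma>) *\<^sub>R (z - xb)
      + transpose A *v (c *\<^sub>R Lb - \<alpha> *\<^sub>R L)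
      + (\<delta> * c) *\<^sub>R (transpose A *v (c *\<^sub>R (A *v z) - (\<alpha> *\<^sub>R (A *v xk) + b))) = 0)
     \<and> L' = Lb + \<delta> *\<^sub>R (c *\<^sub>R (A *v z) - (\<alpha> *\<^sub>R (A *v xk) + b)))
    \<longleftrightarrow> (z - xb = - \<gamma> *\<^sub>R (Dz + transpose A *v (L' + \<alpha> *\<^sub>R (L' - L))
                    + \<beta> *\<^sub>R (transpose A *v (A *v z - b)))
       \<and> L' - Lb = \<delta> *\<^sub>R (A *v z - b + \<alpha> *\<^sub>R (A *v (z - xk))))"
    (is "(?G = 0 \<and> ?U) \<longleftrightarrow> (?E1 \<and> ?E2)")
proof -
  have u: "?U \<longleftrightarrow> ?E2"
    by (auto simp: c algebra_simps)
  moreover have "?U \<Longrightarrow> ?G = 0 \<longleftrightarrow> ?E1"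
  proof -
    assume U: ?U
    define S where "S = Dz + transpose A *v (L' + \<alpha> *\<^sub>R (L' - L)) + \<beta> *\<^sub>R (transpose A *v (A *v z - b))"
    have "L' + \<alpha> *\<^sub>R (L' - L) = (c *\<^sub>R Lb - \<alpha> *\<^sub>R L) + (\<delta>*c) *\<^sub>R (c *\<^sub>R (A *v z) - (\<alpha> *\<^sub>R (A *v xk) + b))"
      unfolding U by (simp add: c algebra_simps)
    then have e: "transpose A *v (L' + \<alpha> *\<^sub>R (L' - L)) = transpose A *v (c *\<^sub>R Lb - \<alpha> *\<^sub>R L)
      + (\<delta> * c) *\<^sub>R (transpose A *v (c *\<^sub>R (A *v z) - (\<alpha> *\<^sub>R (A *v xk) + b)))"
      by (simp only: matrix_vector_right_distrib matrix_vector_mult_scaleR)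
    have "?G = S + (1/\<gamma>) *\<^sub>R (z - xb)"
      unfolding S_def e by (simp only: ac_simps)
    then have "?G = 0 \<longleftrightarrow> (1/\<gamma>) *\<^sub>R (z - xb) = - S"
      by (metis add.commute add_eq_0_iff)
    also have "\<dots> \<longleftrightarrow> z - xb = - \<gamma> *\<^sub>R S"
    proof
      assume h: "(1/\<gamma>) *\<^sub>R (z - xb) = - S"
      have "z - xb = \<gamma> *\<^sub>R ((1/\<gamma>) *\<^sub>R (z - xb))" using gam by simp
      also have "\<dots> = - \<gamma> *\<^sub>R S" unfolding h by simp
      finally show "z - xb = - \<gamma> *\<^sub>R S" .
    next
      assume h: "z - xb = - \<gamma> *\<^sub>R S"
      show "(1/\<gamma>) *\<^sub>R (z - xb) = - S" unfolding h using gam by simp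
    qed
    finally show ?thesis unfolding S_def by simp
  qed
  ultimately show ?thesis by blast
qed

lemma gen:
  fixes Fk :: "nat \<Rightarrow> real^'n \<Rightarrow> real" and Dk :: "nat \<Rightarrow> real^'n \<Rightarrow> real^'n" and A :: "real^'n^'m"
  assumes cvx: "\<And>k. convex_on UNIV (Fk k)" and gd: "\<And>k y. GDERIV (Fk k) y :> Dk k y"
    and gam: "\<gamma> > 0" and del: "\<delta> \<ge> 0" and bet: "\<beta> \<ge> 0" and eta: "\<eta> \<noteq> 0"
  shows "alg_generated Fk t \<eta> \<gamma> \<delta> \<beta> A b x lam \<longleftrightarrow> alg_equations (\<lambda>k. Dk k (x (Suc k))) t \<eta> \<gamma> \<delta> \<beta> A b x lam"
proof -
  have "(is_arg_min (alg_obj (Fk k) t \<eta> \<gamma> \<delta> \<beta> A b x lam k) (\<lambda>_. True) (x (Suc k))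
            \<and> lam (Suc k) = alg_lam_update t \<eta> \<delta> A b x lam k) \<longleftrightarrow>
       (x (Suc k) - alg_bar t x k =
         - \<gamma> *\<^sub>R (Dk k (x (Suc k)) + transpose A *v (lam (Suc k) + alg_alpha t \<eta> k *\<^sub>R (lam (Suc k) - lam k))
                    + \<beta> *\<^sub>R (transpose A *v (A *v x (Suc k) - b)))
       \<and> lam (Suc k) - alg_bar t lam k =
         \<delta> *\<^sub>R (A *v x (Suc k) - b + alg_alpha t \<eta> k *\<^sub>R (A *v (x (Suc k) - x k))))" for k
  proof -
    have c: "alg_c t \<eta> k = alg_alpha t \<eta> k + 1"
      using eta by (simp add: alg_c_def alg_alpha_def field_simps)
    show ?thesis
      unfolding step[OF cvx gd gam del bet] alg_p_def alg_r_def alg_lam_update_def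
      by (rule core[OF c gam])
  qed
  then show ?thesis unfolding alg_generated_def alg_equations_def by simp
qed

theorem proposition2p1:
  fixes f :: "real^'n \<Rightarrow> real" and df :: "real^'n \<Rightarrow> real^'n"
    and A :: "real^'n^'m" and b :: "real^'m"
    and t :: "nat \<Rightarrow> real" and \<rho> \<eta> \<gamma> \<delta> \<beta> L :: real
    and x :: "nat \<Rightarrow> real^'n" and lam :: "nat \<Rightarrow> real^'m"
  assumes f_convex: "convex_on UNIV f"
    and f_grad: "\<And>y. GDERIV f y :> df y"
    and df_cont: "continuous_on UNIV df"
    and t_mono: "\<And>k. k \<ge> 1 \<Longrightarrow> t k \<le> t (Suc k)"
    and t1: "t 1 = 1"
    and t_gt: "\<And>k. k > 2 \<Longrightarrow> t k > 1"
    and t_lim: "filterlim t at_top sequentially"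
    and t_rate: "\<And>k. k \<ge> 1 \<Longrightarrow> (t (Suc k))\<^sup>2 - (t k)\<^sup>2 \<le> \<rho> * t (Suc k)"
    and rho: "0 < \<rho>" "\<rho> \<le> 1"
    and eta: "\<rho> \<le> \<eta>" "\<eta> \<le> 1"
    and gamma: "\<gamma> > 0" and delta: "\<delta> > 0" and beta: "\<beta> \<ge> 0"
    and init: "x 0 = x 1" "lam 0 = lam 1"
  shows "(alg_generated (\<lambda>k. f) t \<eta> \<gamma> \<delta> \<beta> A b x lam
            \<longleftrightarrow> alg_equations (\<lambda>k. df (x (Suc k))) t \<eta> \<gamma> \<delta> \<beta> A b x lam)
       \<and> ((L > 0 \<and> (\<forall>y z. norm (df y - df z) \<le> L * norm (y - z)) \<and> \<gamma> \<le> 1 / L) \<longrightarrow>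
           (alg_generated (\<lambda>k y. inner (df (alg_bar t x k)) y) t \<eta> \<gamma> \<delta> \<beta> A b x lam
            \<longleftrightarrow> alg_equations (\<lambda>k. df (alg_bar t x k)) t \<eta> \<gamma> \<delta> \<beta> A b x lam))"
  proof -
  have eta0: "\<eta> \<noteq> 0" using rho eta by simp
  have I: "alg_generated (\<lambda>k. f) t \<eta> \<gamma> \<delta> \<beta> A b x lam
            \<longleftrightarrow> alg_equations (\<lambda>k. df (x (Suc k))) t \<eta> \<gamma> \<delta> \<beta> A b x lam"
    using gen[where Fk="\<lambda>k. f" and Dk="\<lambda>k. df", OF f_convex f_grad gamma less_imp_le[OF delta] beta eta0] by blast
  have cv: "convex_on UNIV (\<lambda>y. inner (df (alg_bar t x k)) y)" for k
    by (rule affine_convex) (simp add: algebra_simps inner_add_right inner_scaleR_right)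
  have gd: "GDERIV (\<lambda>y. inner (df (alg_bar t x k)) y) y :> df (alg_bar t x k)" for k y
    unfolding gderiv_def by (auto intro!: derivative_eq_intros simp: inner_commute)
  have II: "alg_generated (\<lambda>k y. inner (df (alg_bar t x k)) y) t \<eta> \<gamma> \<delta> \<beta> A b x lam
            \<longleftrightarrow> alg_equations (\<lambda>k. df (alg_bar t x k)) t \<eta> \<gamma> \<delta> \<beta> A b x lam"
    using gen[where Fk="\<lambda>k y. inner (df (alg_bar t x k)) y" and Dk="\<lambda>k y. df (alg_bar t x k)",
        OF cv gd gamma less_imp_le[OF delta] beta eta0] by blast
  show ?thesis using I II by blast
qed

end
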